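(* Let $\lambda=(n_1,n_2)$ be a two-row shape with $n_1\ge n_2\ge 1$ and $n_1\ge 2$, and let $\rho$ be a density on $\lambda$ with positive entries $\rho_{1,j}=a_j$ ($1\le j\le n_1$) and $\rho_{2,j}=b_j$ ($1\le j\le n_2$); set $b_j=0$ for $n_2<j\le n_1$. Then $$|\mathrm{SVT}(\lambda,\rho)|=\sum_{(i_1,\dots,i_{n_1-1})\preceq(b_1,\dots,b_{n_1-1})}\ \prod_{j=1}^{n_1-1}\binom{a_{j+1}+i_j-1}{i_j},$$ where the sum ranges over all $(n_1-1)$-tuples of nonnegative integers $(i_1,\dots,i_{n_1-1})$ with $i_1+\dots+i_\ell\le b_1+\dots+b_\ell$ for every $1\le\ell\le n_1-1$.
   Context: A density on a shape $\lambda$ is an assignment of a nonnegative integer $\rho_{i,j}$ to every cell $(i,j)$ (row $i$, column $j$); let $N=\sum\rho_{i,j}$. A standard set-valued Young tableau of shape $\lambda$ and density $\rho$ assigns to each cell $(i,j)$ a set $S_{i,j}$ with $|S_{i,j}|=\rho_{i,j}$, the sets partitioning $[N]$, such that every element of $S_{i,j}$ is smaller than every element of $S_{i,j+1}$ and of $S_{i+1,j}$ whenever those cells exist. $\mathrm{SVT}(\lambda,\rho)$ is the set of these tableaux. For tuples of nonnegative integers, $\vec x\preceq\vec y$ means $x_1+\dots+x_\ell\le y_1+\dots+y_\ell$ for all $\ell$. *)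

theory Defs
  imports Main
begin

text \<open>A shape is given by its list of row lengths [lambda_1, lambda_2, ...].
  Cells are 1-indexed pairs (row i, column j).\<close>

definition cells :: "nat list \<Rightarrow> (nat \<times> nat) set" where
  "cells lam = {(i, j). 1 \<le> i \<and> i \<le> length lam \<and> 1 \<le> j \<and> j \<le> lam ! (i - 1)}"

definition dens_total :: "nat list \<Rightarrow> (nat \<times> nat \<Rightarrow> nat) \<Rightarrow> nat" where
  "dens_total lam rho = (\<Sum>c\<in>cells lam. rho c)"

text \<open>A tableau is a function from cells to sets; it is normalised to the empty set
  outside the shape so that the collection is a set of genuine objects.\<close>

definition SVT :: "nat list \<Rightarrow> (nat \<times> nat \<Rightarrow> nat) \<Rightarrow> (nat \<times> nat \<Rightarrow> nat set) set" where
  "SVT lam rho = {S.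
     (\<forall>c. c \<notin> cells lam \<longrightarrow> S c = {}) \<and>
     (\<forall>c\<in>cells lam. finite (S c) \<and> card (S c) = rho c) \<and>
     (\<forall>c\<in>cells lam. \<forall>d\<in>cells lam. c \<noteq> d \<longrightarrow> S c \<inter> S d = {}) \<and>
     (\<Union>c\<in>cells lam. S c) = {1..dens_total lam rho} \<and>
     (\<forall>i j. (i, j) \<in> cells lam \<longrightarrow>
        ((i, j + 1) \<in> cells lam \<longrightarrow> (\<forall>x\<in>S (i, j). \<forall>y\<in>S (i, j + 1). x < y)) \<and>
        ((i + 1, j) \<in> cells lam \<longrightarrow> (\<forall>x\<in>S (i, j). \<forall>y\<in>S (i + 1, j). x < y)))}"

end

theory Submission
  imports Defs
begin


lemma SVT_cong:
  assumes "\<And>c. c \<in> cells lam \<Longrightarrow> r1 c = r2 c"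
  shows "SVT lam r1 = SVT lam r2"
proof -
  have "dens_total lam r1 = dens_total lam r2" unfolding dens_total_def using assms by (rule sum.cong[OF refl])
  then show ?thesis unfolding SVT_def using assms by auto
qed

lemma SVT_D:
  assumes "S \<in> SVT lam r"
  shows "(\<forall>d. d \<notin> cells lam \<longrightarrow> S d = {}) \<and>
     (\<forall>c\<in>cells lam. finite (S c) \<and> card (S c) = r c) \<and>
     (\<forall>c\<in>cells lam. \<forall>d\<in>cells lam. c \<noteq> d \<longrightarrow> S c \<inter> S d = {}) \<and>
     (\<Union>c\<in>cells lam. S c) = {1..dens_total lam r} \<and>
     (\<forall>i j. (i, j) \<in> cells lam \<longrightarrow>
        ((i, j + 1) \<in> cells lam \<longrightarrow> (\<forall>x\<in>S (i, j). \<forall>y\<in>S (i, j + 1). x < y)) \<and>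
        ((i + 1, j) \<in> cells lam \<longrightarrow> (\<forall>x\<in>S (i, j). \<forall>y\<in>S (i + 1, j). x < y)))"
  using assms unfolding SVT_def by (rule CollectD)

lemma SVT_finite:
  assumes "finite (cells lam)"
  shows "finite (SVT lam r)"
proof -
  let ?N = "dens_total lam r"
  have "SVT lam r \<subseteq> {f. \<forall>x. (x \<in> cells lam \<longrightarrow> f x \<in> Pow {1..?N}) \<and> (x \<notin> cells lam \<longrightarrow> f x = {})}"
    unfolding SVT_def by auto
  moreover have "finite {f. \<forall>x. (x \<in> cells lam \<longrightarrow> f x \<in> Pow {1..?N}) \<and> (x \<notin> cells lam \<longrightarrow> f x = {})}"
    by (rule finite_set_of_finite_funs) (use assms in auto)
  ultimately show ?thesis by (rule finite_subset)
qed

lemma SVT_step: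
  assumes fin: "finite (cells lam)"
    and c: "c \<in> cells lam"
    and corner1: "(fst c, snd c + 1) \<notin> cells lam" and corner2: "(fst c + 1, snd c) \<notin> cells lam"
    and rc: "r c \<ge> 1"
    and cl': "cells lam' = (if r c = 1 then cells lam - {c} else cells lam)"
    and r': "\<And>d. d \<in> cells lam' \<Longrightarrow> r' d = (if d = c then r c - 1 else r d)"
  shows "card {S \<in> SVT lam r. dens_total lam r \<in> S c} = card (SVT lam' r')"
proof -
  define N where "N = dens_total lam r"
  have sub: "cells lam' \<subseteq> cells lam" using cl' by auto
  have Nsum: "N = r c + (\<Sum>d\<in>cells lam - {c}. r d)"
    unfolding N_def dens_total_def using fin c by (simp add: sum.remove)
  have N1: "N \<ge> 1" using Nsum rc by simp
  have N': "dens_total lam' r' = N - 1"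
  proof (cases "r c = 1")
    case True
    then have "dens_total lam' r' = (\<Sum>d\<in>cells lam - {c}. r d)"
      unfolding dens_total_def using cl' r' by (auto intro!: sum.cong)
    then show ?thesis using Nsum True by simp
  next
    case False
    then have "dens_total lam' r' = (\<Sum>d\<in>cells lam. (if d = c then r c - 1 else r d))"
      unfolding dens_total_def using cl' r' by (auto intro!: sum.cong)
    also have "\<dots> = (r c - 1) + (\<Sum>d\<in>cells lam - {c}. r d)"
      using fin c by (simp add: sum.remove)
    finally show ?thesis using Nsum rc by simp
  qed
  define f where "f = (\<lambda>S::nat\<times>nat \<Rightarrow> nat set. S(c := S c - {N}))"
  define g where "g = (\<lambda>S::nat\<times>nat \<Rightarrow> nat set. S(c := S c \<union> {N}))"
  have into: "f S \<in> SVT lam' r'" if S: "S \<in> SVT lam r" "N \<in> S c" for S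
  proof -
    have out: "\<forall>d. d \<notin> cells lam \<longrightarrow> S d = {}"
      and cd: "\<forall>d\<in>cells lam. finite (S d) \<and> card (S d) = r d"
      and dj: "\<forall>d\<in>cells lam. \<forall>e\<in>cells lam. d \<noteq> e \<longrightarrow> S d \<inter> S e = {}"
      and un: "(\<Union>d\<in>cells lam. S d) = {1..N}"
      and ord: "\<forall>i j. (i, j) \<in> cells lam \<longrightarrow>
        ((i, j + 1) \<in> cells lam \<longrightarrow> (\<forall>x\<in>S (i, j). \<forall>y\<in>S (i, j + 1). x < y)) \<and>
        ((i + 1, j) \<in> cells lam \<longrightarrow> (\<forall>x\<in>S (i, j). \<forall>y\<in>S (i + 1, j). x < y))"
      using SVT_D[OF S(1)] unfolding N_def by auto
    have Nnot: "N \<notin> S d" if "d \<in> cells lam" "d \<noteq> c" for d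
      using dj that c S(2) by blast
    have Sc1: "S c = {N}" if "r c = 1"
    proof -
      have "card (S c) = 1" using cd c that by auto
      then show ?thesis using S(2) by (auto simp: card_1_singleton_iff)
    qed
    have A: "\<forall>d. d \<notin> cells lam' \<longrightarrow> f S d = {}"
      using out Sc1 cl' c unfolding f_def by (auto split: if_splits)
    have B: "\<forall>d\<in>cells lam'. finite (f S d) \<and> card (f S d) = r' d"
    proof
      fix d assume d: "d \<in> cells lam'"
      show "finite (f S d) \<and> card (f S d) = r' d"
      proof (cases "d = c")
        case True
        then show ?thesis using cd c S(2) r'[OF d] unfolding f_def by auto
      next
        case False
        then show ?thesis using cd d sub r'[OF d] unfolding f_def by auto
      qed
    qed
    have C: "\<forall>d\<in>cells lam'. \<forall>e\<in>cells lam'. d \<noteq> e \<longrightarrow> f S d \<inter> f S e = {}"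
    proof (intro ballI impI)
      fix d e assume de: "d \<in> cells lam'" "e \<in> cells lam'" "d \<noteq> e"
      have "S d \<inter> S e = {}" using dj de sub by blast
      moreover have "f S d \<subseteq> S d" "f S e \<subseteq> S e" unfolding f_def by auto
      ultimately show "f S d \<inter> f S e = {}" by blast
    qed
    have D: "(\<Union>d\<in>cells lam'. f S d) = {1..N - 1}"
    proof -
      have "(\<Union>d\<in>cells lam'. f S d) = (\<Union>d\<in>cells lam. S d) - {N}"
      proof
        show "(\<Union>d\<in>cells lam'. f S d) \<subseteq> (\<Union>d\<in>cells lam. S d) - {N}"
          using sub Nnot unfolding f_def by auto
        show "(\<Union>d\<in>cells lam. S d) - {N} \<subseteq> (\<Union>d\<in>cells lam'. f S d)"
        proof
          fix x assume "x \<in> (\<Union>d\<in>cells lam. S d) - {N}"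
          then obtain d where d: "d \<in> cells lam" "x \<in> S d" "x \<noteq> N" by auto
          show "x \<in> (\<Union>d\<in>cells lam'. f S d)"
          proof (cases "d = c")
            case True
            then have "r c \<noteq> 1" using Sc1 d by auto
            then show ?thesis using d True cl' unfolding f_def by auto
          next
            case False
            then show ?thesis using d cl' unfolding f_def by (auto split: if_splits)
          qed
        qed
      qed
      then show ?thesis using un N1 by auto
    qed
    have E: "\<forall>i j. (i, j) \<in> cells lam' \<longrightarrow>
        ((i, j + 1) \<in> cells lam' \<longrightarrow> (\<forall>x\<in>f S (i, j). \<forall>y\<in>f S (i, j + 1). x < y)) \<and>
        ((i + 1, j) \<in> cells lam' \<longrightarrow> (\<forall>x\<in>f S (i, j). \<forall>y\<in>f S (i + 1, j). x < y))"
    proof (intro allI impI conjI ballI)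
      fix i j x y
      assume ij: "(i, j) \<in> cells lam'"
      have ij': "(i,j) \<in> cells lam" using ij sub by auto
      {
        assume nb: "(i, j + 1) \<in> cells lam'" and x: "x \<in> f S (i, j)" and y: "y \<in> f S (i, j + 1)"
        have "x \<in> S (i,j)" "y \<in> S (i,j+1)" using x y unfolding f_def by (auto split: if_splits)
        then show "x < y" using ord ij' nb sub by blast
      }
      {
        assume nb: "(i + 1, j) \<in> cells lam'" and x: "x \<in> f S (i, j)" and y: "y \<in> f S (i + 1, j)"
        have "x \<in> S (i,j)" "y \<in> S (i+1,j)" using x y unfolding f_def by (auto split: if_splits)
        then show "x < y" using ord ij' nb sub by blast
      }
    qed
    show ?thesis unfolding SVT_def mem_Collect_eq N' by (intro conjI A B C D E)
  qed
  have bk: "g S' \<in> SVT lam r \<and> N \<in> g S' c" if hS: "S' \<in> SVT lam' r'" for S'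
  proof -
    have out: "\<forall>d. d \<notin> cells lam' \<longrightarrow> S' d = {}"
      and cd: "\<forall>d\<in>cells lam'. finite (S' d) \<and> card (S' d) = r' d"
      and dj: "\<forall>d\<in>cells lam'. \<forall>e\<in>cells lam'. d \<noteq> e \<longrightarrow> S' d \<inter> S' e = {}"
      and un: "(\<Union>d\<in>cells lam'. S' d) = {1..N - 1}"
      and ord: "\<forall>i j. (i, j) \<in> cells lam' \<longrightarrow>
        ((i, j + 1) \<in> cells lam' \<longrightarrow> (\<forall>x\<in>S' (i, j). \<forall>y\<in>S' (i, j + 1). x < y)) \<and>
        ((i + 1, j) \<in> cells lam' \<longrightarrow> (\<forall>x\<in>S' (i, j). \<forall>y\<in>S' (i + 1, j). x < y))"
      using SVT_D[OF hS] N' by auto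
    have Nnot: "N \<notin> S' d" for d
    proof (cases "d \<in> cells lam'")
      case True
      show ?thesis
      proof
        assume "N \<in> S' d"
        then have "N \<in> {1..N-1}" using True un by blast
        then show False using N1 by auto
      qed
    next
      case False then show ?thesis using out by (metis empty_iff)
    qed
    have lt: "x < N" if "x \<in> S' d" for x d
    proof (cases "d \<in> cells lam'")
      case True
      then have "x \<in> {1..N-1}" using un that by blast
      then show ?thesis using N1 by auto
    next
      case False then show ?thesis using out that by (metis empty_iff)
    qed
    have A: "\<forall>d. d \<notin> cells lam \<longrightarrow> g S' d = {}"
      using out sub c unfolding g_def by auto
    have B: "\<forall>d\<in>cells lam. finite (g S' d) \<and> card (g S' d) = r d"
    proof
      fix d assume d: "d \<in> cells lam"
      show "finite (g S' d) \<and> card (g S' d) = r d"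
      proof (cases "d = c")
        case True
        show ?thesis
        proof (cases "r c = 1")
          case True1: True
          then have "c \<notin> cells lam'" using cl' by auto
          then have "S' c = {}" using out by blast
          then show ?thesis using True True1 unfolding g_def by auto
        next
          case False
          then have "c \<in> cells lam'" using cl' c by auto
          then show ?thesis using True False cd r' Nnot rc unfolding g_def by auto
        qed
      next
        case False
        then have "d \<in> cells lam'" using cl' d by (auto split: if_splits)
        then show ?thesis using False cd r' unfolding g_def by auto
      qed
    qed
    have C: "\<forall>d\<in>cells lam. \<forall>e\<in>cells lam. d \<noteq> e \<longrightarrow> g S' d \<inter> g S' e = {}"
    proof (intro ballI impI)
      fix d e assume de: "d \<in> cells lam" "e \<in> cells lam" "d \<noteq> e"
      have "S' d \<inter> S' e = {}"
      proof (cases "d \<in> cells lam' \<and> e \<in> cells lam'")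
        case True then show ?thesis using dj de by auto
      next
        case False then show ?thesis using out by (metis Int_empty_left Int_empty_right)
      qed
      then show "g S' d \<inter> g S' e = {}" using Nnot de unfolding g_def by auto
    qed
    have D: "(\<Union>d\<in>cells lam. g S' d) = {1..N}"
    proof -
      have "(\<Union>d\<in>cells lam. g S' d) = (\<Union>d\<in>cells lam'. S' d) \<union> {N}"
      proof
        have ne: "d \<in> cells lam'" if "x \<in> S' d" for x d using out that by blast
        show "(\<Union>d\<in>cells lam. g S' d) \<subseteq> (\<Union>d\<in>cells lam'. S' d) \<union> {N}"
        proof
          fix x assume "x \<in> (\<Union>d\<in>cells lam. g S' d)"
          then obtain d where d: "d \<in> cells lam" "x \<in> g S' d" by blast
          show "x \<in> (\<Union>d\<in>cells lam'. S' d) \<union> {N}"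
          proof (cases "d = c")
            case True
            then have "x \<in> S' c \<or> x = N" using d unfolding g_def by auto
            then show ?thesis using ne by blast
          next
            case False
            then have "x \<in> S' d" using d unfolding g_def by auto
            then show ?thesis using ne by blast
          qed
        qed
        show "(\<Union>d\<in>cells lam'. S' d) \<union> {N} \<subseteq> (\<Union>d\<in>cells lam. g S' d)"
        proof
          fix x assume "x \<in> (\<Union>d\<in>cells lam'. S' d) \<union> {N}"
          then consider "x = N" | d where "d \<in> cells lam'" "x \<in> S' d" by blast
          then show "x \<in> (\<Union>d\<in>cells lam. g S' d)"
          proof cases
            case 1 then show ?thesis using c unfolding g_def by force
          next
            case (2 d)
            then have "x \<in> g S' d" "d \<in> cells lam" using sub unfolding g_def by auto
            then show ?thesis by blast
          qed
        qed
      qed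
      then show ?thesis using un N1 by auto
    qed
    have E: "\<forall>i j. (i, j) \<in> cells lam \<longrightarrow>
        ((i, j + 1) \<in> cells lam \<longrightarrow> (\<forall>x\<in>g S' (i, j). \<forall>y\<in>g S' (i, j + 1). x < y)) \<and>
        ((i + 1, j) \<in> cells lam \<longrightarrow> (\<forall>x\<in>g S' (i, j). \<forall>y\<in>g S' (i + 1, j). x < y))"
    proof (intro allI impI conjI ballI)
      fix i j x y
      assume ij: "(i, j) \<in> cells lam"
      {
        assume nb: "(i, j + 1) \<in> cells lam" and x: "x \<in> g S' (i, j)" and y: "y \<in> g S' (i, j + 1)"
        have "(i,j) \<noteq> c" using nb corner1 by auto
        then have x': "x \<in> S' (i,j)" using x unfolding g_def by auto
        show "x < y"
        proof (cases "y = N")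
          case True then show ?thesis using lt x' by auto
        next
          case False
          then have y': "y \<in> S' (i, j+1)" using y unfolding g_def by (auto split: if_splits)
          then have "(i,j+1) \<in> cells lam'" using out by auto
          moreover have "(i,j) \<in> cells lam'" using x' out by auto
          ultimately show ?thesis using ord x' y' by blast
        qed
      }
      {
        assume nb: "(i + 1, j) \<in> cells lam" and x: "x \<in> g S' (i, j)" and y: "y \<in> g S' (i + 1, j)"
        have "(i,j) \<noteq> c" using nb corner2 by auto
        then have x': "x \<in> S' (i,j)" using x unfolding g_def by auto
        show "x < y"
        proof (cases "y = N")
          case True then show ?thesis using lt x' by auto
        next
          case False
          then have y': "y \<in> S' (i+1, j)" using y unfolding g_def by (auto split: if_splits)
          then have "(i+1,j) \<in> cells lam'" using out by auto
          moreover have "(i,j) \<in> cells lam'" using x' out by auto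
          ultimately show ?thesis using ord x' y' by blast
        qed
      }
    qed
    have "g S' \<in> SVT lam r" unfolding SVT_def mem_Collect_eq N_def[symmetric] by (intro conjI A B C D E)
    then show ?thesis by (simp add: g_def)
  qed
  have "bij_betw f {S \<in> SVT lam r. N \<in> S c} (SVT lam' r')"
  proof (rule bij_betw_byWitness[where f'=g])
    show "\<forall>S\<in>{S \<in> SVT lam r. N \<in> S c}. g (f S) = S"
      unfolding f_def g_def by (auto simp: insert_absorb)
    show "\<forall>S'\<in>SVT lam' r'. f (g S') = S'"
    proof
      fix S' assume S': "S' \<in> SVT lam' r'"
      have "N \<notin> S' c"
      proof (cases "c \<in> cells lam'")
        case True
        have "(\<Union>d\<in>cells lam'. S' d) = {1..N - 1}" using SVT_D[OF S'] N' by auto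
        show ?thesis
        proof
          assume "N \<in> S' c"
          then have "N \<in> {1..N-1}" using True \<open>(\<Union>d\<in>cells lam'. S' d) = {1..N - 1}\<close> by blast
          then show False using N1 by auto
        qed
      next
        case False
        have "\<forall>d. d \<notin> cells lam' \<longrightarrow> S' d = {}" using SVT_D[OF S'] by (elim conjE)
        then show ?thesis using False by blast
      qed
      then show "f (g S') = S'" unfolding f_def g_def by auto
    qed
    show "f ` {S \<in> SVT lam r. N \<in> S c} \<subseteq> SVT lam' r'" using into by auto
    show "g ` SVT lam' r' \<subseteq> {S \<in> SVT lam r. N \<in> S c}" using bk by auto
  qed
  then show ?thesis unfolding N_def by (rule bij_betw_same_card)
qed




lemma SVT_corner:
  assumes S: "S \<in> SVT lam r" and pos: "\<forall>c\<in>cells lam. r c > 0" and N1: "dens_total lam r \<ge> 1"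
  shows "\<exists>c\<in>cells lam. dens_total lam r \<in> S c \<and> (fst c, snd c + 1) \<notin> cells lam \<and> (fst c + 1, snd c) \<notin> cells lam"
proof -
  define N where "N = dens_total lam r"
  have out: "\<forall>d. d \<notin> cells lam \<longrightarrow> S d = {}"
      and cd: "\<forall>d\<in>cells lam. finite (S d) \<and> card (S d) = r d"
      and un: "(\<Union>d\<in>cells lam. S d) = {1..N}"
      and ord: "\<forall>i j. (i, j) \<in> cells lam \<longrightarrow>
        ((i, j + 1) \<in> cells lam \<longrightarrow> (\<forall>x\<in>S (i, j). \<forall>y\<in>S (i, j + 1). x < y)) \<and>
        ((i + 1, j) \<in> cells lam \<longrightarrow> (\<forall>x\<in>S (i, j). \<forall>y\<in>S (i + 1, j). x < y))"
    using SVT_D[OF S] unfolding N_def by auto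
  have "N \<in> {1..N}" using N1 unfolding N_def by auto
  then obtain c where c: "c \<in> cells lam" "N \<in> S c" using un by blast
  obtain i j where ij: "c = (i,j)" by (cases c)
  have ne: "\<exists>y. y \<in> S d" if "d \<in> cells lam" for d
  proof -
    have "card (S d) > 0" using cd pos that by auto
    then show ?thesis by (metis card_gt_0_iff ex_in_conv)
  qed
  have le: "y \<le> N" if "y \<in> S d" "d \<in> cells lam" for y d
  proof -
    have "y \<in> {1..N}" using un that by blast
    then show ?thesis by auto
  qed
  have "(i, j + 1) \<notin> cells lam"
  proof
    assume h: "(i, j + 1) \<in> cells lam"
    then obtain y where y: "y \<in> S (i, j+1)" using ne by blast
    then have "N < y" using ord h c ij by blast
    moreover have "y \<le> N" using le y h by blast
    ultimately show False by simp
  qed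
  moreover have "(i + 1, j) \<notin> cells lam"
  proof
    assume h: "(i + 1, j) \<in> cells lam"
    then obtain y where y: "y \<in> S (i+1, j)" using ne by blast
    then have "N < y" using ord h c ij by blast
    moreover have "y \<le> N" using le y h by blast
    ultimately show False by simp
  qed
  ultimately show ?thesis using c ij unfolding N_def by auto
qed

lemma cells2[simp]: "(i,j) \<in> cells [n1, n2] \<longleftrightarrow> 1 \<le> j \<and> ((i = 1 \<and> j \<le> n1) \<or> (i = 2 \<and> j \<le> n2))"
  unfolding cells_def by (cases i; cases "i - 1"; auto)

lemma cells2_eq: "cells [n1, n2] = Pair 1 ` {1..n1} \<union> Pair 2 ` {1..n2}"
  by auto

lemma cells2_finite[simp]: "finite (cells [n1, n2])"
  unfolding cells2_eq by auto

definition dens :: "nat list \<Rightarrow> nat list \<Rightarrow> nat \<times> nat \<Rightarrow> nat" where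
  "dens al bl = (\<lambda>(i,j). if i = 1 then al!(j-1) else if i = 2 then bl!(j-1) else 0)"

definition T :: "nat list \<Rightarrow> nat list \<Rightarrow> nat" where
  "T al bl = card (SVT [length al, length bl] (dens al bl))"

definition declast :: "nat list \<Rightarrow> nat list" where
  "declast xs = (if last xs \<le> 1 then butlast xs else butlast xs @ [last xs - 1])"

definition posl :: "nat list \<Rightarrow> bool" where
  "posl xs \<longleftrightarrow> (\<forall>x\<in>set xs. x > 0)"

lemma T_nil: "T [] [] = 1"
proof -
  have "SVT [0, 0] (dens [] []) = {\<lambda>_. {}}"
  proof -
    have e: "cells [0,0] = {}" by auto
    show ?thesis unfolding SVT_def dens_total_def e by auto
  qed
  then show ?thesis unfolding T_def by simp
qed

lemma declast_len:
  assumes "xs \<noteq> []" "posl xs"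
  shows "length (declast xs) = (if last xs = 1 then length xs - 1 else length xs)"
proof -
  have "last xs > 0" using assms unfolding posl_def by auto
  then show ?thesis using assms(1) unfolding declast_def by auto
qed

lemma declast_nth:
  assumes "xs \<noteq> []" "posl xs" "k < length (declast xs)"
  shows "declast xs ! k = (if k = length xs - 1 then last xs - 1 else xs ! k)"
proof -
  have lp: "last xs > 0" using assms unfolding posl_def by auto
  show ?thesis
  proof (cases "last xs \<le> 1")
    case True
    then have "k < length xs - 1" using assms(3) unfolding declast_def by auto
    then show ?thesis using True unfolding declast_def by (auto simp: nth_butlast)
  next
    case False
    then have k: "k < length xs" using assms(1,3) unfolding declast_def by auto
    show ?thesis
    proof (cases "k = length xs - 1")
      case True then show ?thesis using False assms(1) unfolding declast_def by (auto simp: nth_append)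
    next
      case False2: False
      then have "k < length (butlast xs)" using k by auto
      then show ?thesis using False False2 unfolding declast_def by (auto simp: nth_append nth_butlast)
    qed
  qed
qed

lemma declast_posl:
  assumes "xs \<noteq> []" "posl xs"
  shows "posl (declast xs)"
  using assms unfolding declast_def posl_def by (auto dest: in_set_butlastD)

lemma dens_last_a:
  assumes "al \<noteq> []" "posl al"
  shows "dens al bl (1, length al) = last al"
  using assms unfolding dens_def by (simp add: last_conv_nth)

lemma dens_last_b:
  assumes "bl \<noteq> []" "posl bl"
  shows "dens al bl (2, length bl) = last bl"
  using assms unfolding dens_def by (simp add: last_conv_nth)

lemma dens_pos:
  assumes "posl al" "posl bl" "c \<in> cells [length al, length bl]"
  shows "dens al bl c > 0"
proof -
  obtain i j where c: "c = (i,j)" by (cases c)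
  show ?thesis using assms unfolding c dens_def posl_def by (auto simp: nth_mem)
qed

lemma T_stepA:
  assumes "al \<noteq> []" "posl al" "posl bl" "length bl < length al"
  shows "card {S \<in> SVT [length al, length bl] (dens al bl). dens_total [length al, length bl] (dens al bl) \<in> S (1, length al)}
         = T (declast al) bl"
  unfolding T_def
proof (rule SVT_step)
  let ?c = "(1::nat, length al)"
  show "finite (cells [length al, length bl])" by simp
  show "?c \<in> cells [length al, length bl]" using assms by (cases al) auto
  show "(fst ?c, snd ?c + 1) \<notin> cells [length al, length bl]" by simp
  show "(fst ?c + 1, snd ?c) \<notin> cells [length al, length bl]" using assms by simp
  show "1 \<le> dens al bl ?c" using dens_last_a[OF assms(1,2)] assms(1,2) last_in_set[OF assms(1)] unfolding posl_def by fastforce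
  show "cells [length (declast al), length bl] =
    (if dens al bl ?c = 1 then cells [length al, length bl] - {?c} else cells [length al, length bl])"
    using declast_len[OF assms(1,2)] dens_last_a[OF assms(1,2)] assms(4) by (auto simp: set_eq_iff)
  show "dens (declast al) bl d = (if d = ?c then dens al bl ?c - 1 else dens al bl d)"
    if "d \<in> cells [length (declast al), length bl]" for d
  proof -
    obtain i j where d: "d = (i,j)" by (cases d)
    have len: "length (declast al) \<le> length al" using declast_len[OF assms(1,2)] by auto
    show ?thesis
    proof (cases "i = 1")
      case True
      then have j: "1 \<le> j" "j \<le> length (declast al)" using that d by auto
      then have "declast al ! (j - 1) = (if j - 1 = length al - 1 then last al - 1 else al ! (j - 1))"
        using declast_nth[OF assms(1,2)] by auto
      then show ?thesis using True d j len dens_last_a[OF assms(1,2)] unfolding dens_def by auto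
    next
      case False
      then show ?thesis using d that unfolding dens_def by auto
    qed
  qed
qed

lemma T_stepB:
  assumes "bl \<noteq> []" "posl al" "posl bl" "length bl \<le> length al"
  shows "card {S \<in> SVT [length al, length bl] (dens al bl). dens_total [length al, length bl] (dens al bl) \<in> S (2, length bl)}
         = T al (declast bl)"
  unfolding T_def
proof (rule SVT_step)
  let ?c = "(2::nat, length bl)"
  show "finite (cells [length al, length bl])" by simp
  show "?c \<in> cells [length al, length bl]" using assms by (cases bl) auto
  show "(fst ?c, snd ?c + 1) \<notin> cells [length al, length bl]" by simp
  show "(fst ?c + 1, snd ?c) \<notin> cells [length al, length bl]" using assms by simp
  show "1 \<le> dens al bl ?c" using dens_last_b[OF assms(1,3)] assms(1,3) last_in_set[OF assms(1)] unfolding posl_def by fastforce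
  show "cells [length al, length (declast bl)] =
    (if dens al bl ?c = 1 then cells [length al, length bl] - {?c} else cells [length al, length bl])"
    using declast_len[OF assms(1,3)] dens_last_b[OF assms(1,3)] assms(4) by (auto simp: set_eq_iff)
  show "dens al (declast bl) d = (if d = ?c then dens al bl ?c - 1 else dens al bl d)"
    if "d \<in> cells [length al, length (declast bl)]" for d
  proof -
    obtain i j where d: "d = (i,j)" by (cases d)
    have len: "length (declast bl) \<le> length bl" using declast_len[OF assms(1,3)] by auto
    show ?thesis
    proof (cases "i = 2")
      case True
      then have j: "1 \<le> j" "j \<le> length (declast bl)" using that d by auto
      then have "declast bl ! (j - 1) = (if j - 1 = length bl - 1 then last bl - 1 else bl ! (j - 1))"
        using declast_nth[OF assms(1,3)] by auto
      then show ?thesis using True d j len dens_last_b[OF assms(1,3)] unfolding dens_def by auto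
    next
      case False
      then show ?thesis using d that unfolding dens_def by auto
    qed
  qed
qed




lemma T_split:
  assumes al: "al \<noteq> []" "posl al" and bl: "posl bl" and len: "length bl \<le> length al"
  shows "T al bl = (if length bl < length al then T (declast al) bl else 0)
                 + (if bl = [] then 0 else T al (declast bl))"
proof -
  let ?lam = "[length al, length bl]" and ?r = "dens al bl"
  define N where "N = dens_total ?lam ?r"
  define X where "X = SVT ?lam ?r"
  define A where "A = {S \<in> X. N \<in> S (1, length al)}"
  define B where "B = {S \<in> X. N \<in> S (2, length bl)}"
  have posr: "\<forall>c\<in>cells ?lam. ?r c > 0" using dens_pos al bl by blast
  have c11: "(1,1) \<in> cells ?lam" using al by (cases al) auto
  have N1: "N \<ge> 1"
  proof -
    have "N \<noteq> 0" unfolding N_def dens_total_def using posr c11 by (simp add: sum_eq_0_iff) blast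
    then show ?thesis by simp
  qed
  have finX: "finite X" unfolding X_def by (rule SVT_finite) simp
  have cases: "(N \<in> S (1, length al) \<and> length bl < length al) \<or> (N \<in> S (2, length bl) \<and> bl \<noteq> [])"
    if S: "S \<in> X" for S
  proof -
    obtain c where c: "c \<in> cells ?lam" "N \<in> S c" "(fst c, snd c + 1) \<notin> cells ?lam" "(fst c + 1, snd c) \<notin> cells ?lam"
      using SVT_corner[OF S[unfolded X_def] posr] N1 unfolding N_def by blast
    obtain i j where ij: "c = (i,j)" by (cases c)
    have "(i = 1 \<and> j = length al \<and> length bl < length al) \<or> (i = 2 \<and> j = length bl \<and> 1 \<le> length bl)"
      using c(1,3,4) unfolding ij by (simp, linarith)
    then show ?thesis using c(2) unfolding ij by auto
  qed
  have disj: "A \<inter> B = {}"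
  proof -
    have "False" if "S \<in> A" "S \<in> B" for S
    proof -
      have S: "S \<in> X" using that A_def by auto
      have "(1, length al) \<in> cells ?lam" using al by (cases al) auto
      moreover have "(2, length bl) \<in> cells ?lam" if "bl \<noteq> []" using that by (cases bl) auto
      moreover have "bl \<noteq> []"
      proof
        assume "bl = []"
        moreover have "(2::nat, 0::nat) \<notin> cells ?lam" by simp
        ultimately have "S (2, length bl) = {}" using SVT_D[OF S[unfolded X_def]] by auto
        then show False using that(2) B_def by auto
      qed
      ultimately have "S (1, length al) \<inter> S (2, length bl) = {}"
        using SVT_D[OF S[unfolded X_def]] by auto
      then show False using that A_def B_def by auto
    qed
    then show ?thesis by blast
  qed
  have TA: "card A = T (declast al) bl" if "length bl < length al"
    using T_stepA[OF al bl that] unfolding A_def X_def N_def .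
  have TB: "card B = T al (declast bl)" if "bl \<noteq> []"
    using T_stepB[OF that al(2) bl len] unfolding B_def X_def N_def .
  have TX: "T al bl = card X" unfolding T_def X_def ..
  show ?thesis
  proof (cases "length bl < length al")
    case True
    show ?thesis
    proof (cases "bl = []")
      case True2: True
      have "X = A" using cases True2 unfolding A_def by auto
      then show ?thesis using TX TA True True2 by simp
    next
      case False
      have "X = A \<union> B" using cases unfolding A_def B_def by auto
      then have "card X = card A + card B" using disj finX by (simp add: card_Un_disjoint)
      then show ?thesis using TX TA TB True False by simp
    qed
  next
    case False
    then have bne: "bl \<noteq> []" using al len by auto
    have "X = B" using cases False unfolding B_def by auto
    then show ?thesis using TX TB False bne by simp
  qed
qed

lemma T_one_row:
  assumes "posl al" shows "T al [] = 1"
  using assms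
proof (induction "sum_list al" arbitrary: al rule: less_induct)
  case less
  show ?case
  proof (cases "al = []")
    case True then show ?thesis using T_nil by simp
  next
    case False
    have "T al [] = T (declast al) []" using T_split[OF False less.prems, of "[]"] False by (simp add: posl_def)
    moreover have "sum_list (declast al) < sum_list al"
    proof -
      obtain ys y where al: "al = ys @ [y]" using False by (cases al rule: rev_cases) auto
      have "y > 0" using less.prems al unfolding posl_def by auto
      then show ?thesis unfolding al declast_def by auto
    qed
    ultimately show ?thesis using less.hyps declast_posl[OF False less.prems] by simp
  qed
qed




fun trunc :: "nat list \<Rightarrow> nat \<Rightarrow> nat list" where
  "trunc [] v = []"
| "trunc (x#xs) v = (if v = 0 then [] else if v \<le> x then [v] else x # trunc xs (v - x))"

lemma trunc_posl: "posl bl \<Longrightarrow> posl (trunc bl v)"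
  by (induction bl v rule: trunc.induct) (auto simp: posl_def)

lemma trunc_len: "length (trunc bl v) \<le> length bl"
  by (induction bl v rule: trunc.induct) auto

lemma trunc_0[simp]: "trunc bl 0 = []"
  by (cases bl) auto

lemma trunc_full: "posl bl \<Longrightarrow> trunc bl (sum_list bl) = bl"
proof (induction bl)
  case Nil then show ?case by simp
next
  case (Cons x xs)
  have x: "x > 0" and p: "posl xs" using Cons.prems by (auto simp: posl_def)
  show ?case
  proof (cases "xs = []")
    case True then show ?thesis using x by simp
  next
    case False
    then have "sum_list xs > 0" using p unfolding posl_def
      by (cases xs) auto
    then have A: "x + sum_list xs \<noteq> 0" "\<not> (x + sum_list xs \<le> x)" by linarith+
    have "trunc (x#xs) (x + sum_list xs) = x # trunc xs (x + sum_list xs - x)"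
      by (simp only: trunc.simps A if_False)
    then show ?thesis using Cons.IH[OF p] by simp
  qed
qed

lemma declast_single: "declast [y] = (if y \<le> 1 then [] else [y - 1])"
  unfolding declast_def by auto

lemma declast_cons: "ys \<noteq> [] \<Longrightarrow> declast (x # ys) = x # declast ys"
  unfolding declast_def by auto

lemma trunc_len_iff:
  assumes "posl bl" "w \<le> sum_list bl"
  shows "length (trunc bl w) \<le> k \<longleftrightarrow> w \<le> sum_list (take k bl)"
  using assms
proof (induction bl arbitrary: w k)
  case Nil then show ?case by simp
next
  case (Cons x xs)
  have x: "x > 0" and p: "posl xs" using Cons.prems by (auto simp: posl_def)
  show ?case
  proof (cases "w = 0")
    case True then show ?thesis by simp
  next
    case w0: False
    show ?thesis
    proof (cases "w \<le> x")
      case True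
      then show ?thesis using w0 by (cases k) auto
    next
      case False
      have w': "w - x \<le> sum_list xs" using Cons.prems False by auto
      show ?thesis
      proof (cases k)
        case 0 then show ?thesis using w0 False by auto
      next
        case (Suc k')
        have "length (trunc xs (w - x)) \<le> k' \<longleftrightarrow> w - x \<le> sum_list (take k' xs)"
          using Cons.IH[OF p w'] .
        then show ?thesis using Suc w0 False by auto
      qed
    qed
  qed
qed

lemma trunc_len_mono:
  assumes "posl bl" "v \<le> w" "w \<le> sum_list bl"
  shows "length (trunc bl v) \<le> length (trunc bl w)"
proof -
  have "w \<le> sum_list (take (length (trunc bl w)) bl)"
    using trunc_len_iff[OF assms(1,3), of "length (trunc bl w)"] by simp
  then have "v \<le> sum_list (take (length (trunc bl w)) bl)" using assms(2) by simp
  then show ?thesis using trunc_len_iff[OF assms(1)] assms by simp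
qed

lemma trunc_ne: "posl bl \<Longrightarrow> 0 < w \<Longrightarrow> w \<le> sum_list bl \<Longrightarrow> trunc bl w \<noteq> []"
  using trunc_len_iff[of bl w 0] by auto

lemma trunc_declast:
  assumes "posl bl" "Suc v \<le> sum_list bl"
  shows "declast (trunc bl (Suc v)) = trunc bl v"
  using assms
proof (induction bl arbitrary: v)
  case Nil then show ?case by simp
next
  case (Cons x xs)
  have x: "x > 0" and p: "posl xs" using Cons.prems by (auto simp: posl_def)
  show ?case
  proof (cases "Suc v \<le> x")
    case True
    then show ?thesis by (auto simp: declast_single)
  next
    case False
    then obtain u where u: "Suc v - x = Suc u" "v - x = u" by (metis Suc_diff_le not_less_eq_eq)
    have le: "Suc u \<le> sum_list xs" using Cons.prems u False by auto
    have ne: "trunc xs (Suc u) \<noteq> []" using trunc_ne[OF p _ le] by simp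
    have "declast (trunc (x # xs) (Suc v)) = x # declast (trunc xs (Suc u))"
      using False u ne by (simp add: declast_cons)
    also have "\<dots> = x # trunc xs u" using Cons.IH[OF p le] by simp
    also have "\<dots> = trunc (x # xs) v" using False u x by auto
    finally show ?thesis .
  qed
qed

definition TU :: "nat list \<Rightarrow> nat list \<Rightarrow> nat" where
  "TU al bl' = (if length bl' < length al then T (declast al) bl' else 0)"

lemma T_sum:
  assumes al: "al \<noteq> []" "posl al" and bl: "posl bl"
    and w: "w \<le> sum_list bl" and len: "length (trunc bl w) \<le> length al"
  shows "T al (trunc bl w) = (\<Sum>v\<le>w. TU al (trunc bl v))"
  using w len
proof (induction w)
  case 0
  then show ?case using T_split[OF al, of "[]"] by (simp add: TU_def posl_def)
next
  case (Suc w)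
  have tb: "posl (trunc bl (Suc w))" using trunc_posl[OF bl] .
  have ne: "trunc bl (Suc w) \<noteq> []" using trunc_ne[OF bl _ Suc.prems(1)] by simp
  have lw: "length (trunc bl w) \<le> length al"
    using trunc_len_mono[OF bl _ Suc.prems(1), of w] Suc.prems(2) by simp
  have "T al (trunc bl (Suc w)) = TU al (trunc bl (Suc w)) + T al (trunc bl w)"
    using T_split[OF al tb Suc.prems(2)] ne trunc_declast[OF bl Suc.prems(1)] by (simp add: TU_def)
  also have "T al (trunc bl w) = (\<Sum>v\<le>w. TU al (trunc bl v))"
    using Suc.IH Suc.prems lw by simp
  finally show ?case by (simp add: add.commute)
qed

lemma binom_sum_step:
  fixes g :: "nat \<Rightarrow> nat"
  shows "(\<Sum>u\<le>w. \<Sum>v\<le>u. ((r + (u - v)) choose (u - v)) * g v)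
       = (\<Sum>v\<le>w. ((Suc r + (w - v)) choose (w - v)) * g v)"
proof (induction w)
  case 0 then show ?case by simp
next
  case (Suc w)
  have "(\<Sum>v\<le>Suc w. ((Suc r + (Suc w - v)) choose (Suc w - v)) * g v)
      = (\<Sum>v\<le>w. ((Suc r + Suc (w - v)) choose Suc (w - v)) * g v) + g (Suc w)"
    by (simp add: Suc_diff_le)
  also have "(\<Sum>v\<le>w. ((Suc r + Suc (w - v)) choose Suc (w - v)) * g v)
      = (\<Sum>v\<le>w. ((Suc r + (w - v)) choose (w - v)) * g v) + (\<Sum>v\<le>w. ((r + Suc (w - v)) choose Suc (w - v)) * g v)"
    by (simp add: sum.distrib[symmetric] algebra_simps)
  finally have R: "(\<Sum>v\<le>Suc w. ((Suc r + (Suc w - v)) choose (Suc w - v)) * g v)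
      = (\<Sum>v\<le>w. ((Suc r + (w - v)) choose (w - v)) * g v) + (\<Sum>v\<le>w. ((r + Suc (w - v)) choose Suc (w - v)) * g v) + g (Suc w)" .
  have L: "(\<Sum>v\<le>Suc w. ((r + (Suc w - v)) choose (Suc w - v)) * g v)
      = (\<Sum>v\<le>w. ((r + Suc (w - v)) choose Suc (w - v)) * g v) + g (Suc w)"
    by (simp add: Suc_diff_le)
  show ?case using R L Suc.IH by simp
qed




lemma TU_append:
  assumes al0: "al0 \<noteq> []" "posl al0" and bl: "posl bl" and x: "x \<ge> 1" and w: "w \<le> sum_list bl"
  shows "TU (al0 @ [x]) (trunc bl w) = (if length (trunc bl w) \<le> length al0
           then (\<Sum>v\<le>w. ((x - 1 + (w - v)) choose (w - v)) * TU al0 (trunc bl v)) else 0)"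
  using x w
proof (induction x arbitrary: w)
  case 0 then show ?case by simp
next
  case (Suc x)
  show ?case
  proof (cases "length (trunc bl w) \<le> length al0")
    case False
    then show ?thesis unfolding TU_def by simp
  next
    case cond: True
    have condu: "length (trunc bl u) \<le> length al0" if "u \<le> w" for u
      using trunc_len_mono[OF bl that Suc.prems(2)] cond by simp
    show ?thesis
    proof (cases "x = 0")
      case True
      have "TU (al0 @ [Suc x]) (trunc bl w) = T al0 (trunc bl w)"
        unfolding TU_def using cond True by (simp add: declast_def)
      also have "\<dots> = (\<Sum>v\<le>w. TU al0 (trunc bl v))"
        using T_sum[OF al0 bl Suc.prems(2) cond] .
      finally show ?thesis using True cond by simp
    next
      case False
      have al1: "al0 @ [x] \<noteq> []" "posl (al0 @ [x])" using al0 False by (auto simp: posl_def)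
      have "TU (al0 @ [Suc x]) (trunc bl w) = T (al0 @ [x]) (trunc bl w)"
        unfolding TU_def using cond False by (simp add: declast_def)
      also have "\<dots> = (\<Sum>u\<le>w. TU (al0 @ [x]) (trunc bl u))"
        using T_sum[OF al1 bl Suc.prems(2)] cond by simp
      also have "\<dots> = (\<Sum>u\<le>w. \<Sum>v\<le>u. ((x - 1 + (u - v)) choose (u - v)) * TU al0 (trunc bl v))"
      proof (rule sum.cong[OF refl])
        fix u assume u: "u \<in> {..w}"
        then have "u \<le> sum_list bl" using Suc.prems(2) by simp
        then show "TU (al0 @ [x]) (trunc bl u) = (\<Sum>v\<le>u. ((x - 1 + (u - v)) choose (u - v)) * TU al0 (trunc bl v))"
          using Suc.IH[of u] False condu[of u] u by simp
      qed
      also have "\<dots> = (\<Sum>v\<le>w. ((Suc (x - 1) + (w - v)) choose (w - v)) * TU al0 (trunc bl v))"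
        by (rule binom_sum_step)
      finally show ?thesis using False cond by simp
    qed
  qed
qed




declare upt_Suc[simp del]

definition Bp :: "(nat \<Rightarrow> nat) \<Rightarrow> nat \<Rightarrow> nat \<Rightarrow> nat" where
  "Bp b n2 l = (\<Sum>j=1..l. if j \<le> n2 then b j else 0)"

fun G :: "(nat \<Rightarrow> nat) \<Rightarrow> (nat \<Rightarrow> nat) \<Rightarrow> nat \<Rightarrow> nat \<Rightarrow> nat \<Rightarrow> nat" where
  "G a b n2 0 w = (if w = 0 then 1 else 0)"
| "G a b n2 (Suc m) w = (if w \<le> Bp b n2 (Suc m)
      then (\<Sum>v\<le>w. ((a (m + 2) + (w - v) - 1) choose (w - v)) * G a b n2 m v) else 0)"

lemma Bp_take: "sum_list (take k (map b [1..<n2+1])) = Bp b n2 k"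
proof (induction k)
  case 0 then show ?case by (simp add: Bp_def)
next
  case (Suc k)
  show ?case
  proof (cases "k < n2")
    case True
    have "take (Suc k) (map b [1..<n2+1]) = take k (map b [1..<n2+1]) @ [b (Suc k)]"
      using True by (simp add: take_Suc_conv_app_nth)
    then show ?thesis using Suc True by (simp add: Bp_def)
  next
    case False
    have "take (Suc k) (map b [1..<n2+1]) = take k (map b [1..<n2+1])"
      using False by simp
    then show ?thesis using Suc False by (simp add: Bp_def)
  qed
qed

lemma posl_map:
  assumes "\<forall>j\<in>{1..n}. a j > 0" shows "posl (map a [1..<n+1])"
  using assms unfolding posl_def by auto

lemma posl_take: "posl xs \<Longrightarrow> posl (take k xs)"
  unfolding posl_def by (auto dest: in_set_takeD)

lemma claim1:
  assumes apos: "\<forall>j\<in>{1..n1}. a j > 0" and bpos: "\<forall>j\<in>{1..n2}. b j > 0"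
    and m: "Suc m \<le> n1" and w: "w \<le> sum_list (map b [1..<n2+1])"
  shows "TU (take (Suc m) (map a [1..<n1+1])) (trunc (map b [1..<n2+1]) w) = G a b n2 m w"
  using m w
proof (induction m arbitrary: w)
  case 0
  let ?bl = "map b [1..<n2+1]"
  have bl: "posl ?bl" using posl_map[OF bpos] .
  have t1: "take (Suc 0) (map a [1..<n1+1]) = [a 1]" using 0 by (cases n1) (auto simp: upt_rec)
  have a1: "posl [a 1]" using apos 0 unfolding posl_def by auto
  have iff: "length (trunc ?bl w) \<le> 0 \<longleftrightarrow> w = 0" using trunc_len_iff[OF bl 0(2), of 0] by simp
  show ?case
  proof (cases "w = 0")
    case True
    then show ?thesis unfolding t1 TU_def using T_one_row[OF declast_posl[OF _ a1]] by simp
  next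
    case False
    then show ?thesis unfolding t1 TU_def using iff by simp
  qed
next
  case (Suc m)
  let ?bl = "map b [1..<n2+1]" and ?al = "map a [1..<n1+1]"
  have bl: "posl ?bl" using posl_map[OF bpos] .
  have al: "posl ?al" using posl_map[OF apos] .
  have tk: "take (Suc (Suc m)) ?al = take (Suc m) ?al @ [a (m + 2)]"
    using Suc.prems(1) by (simp add: take_Suc_conv_app_nth)
  have al0: "take (Suc m) ?al \<noteq> []" "posl (take (Suc m) ?al)" using Suc.prems(1) posl_take[OF al] by auto
  have am: "a (m + 2) \<ge> 1" using apos Suc.prems(1) by (simp add: Suc_le_eq)
  have lenal0: "length (take (Suc m) ?al) = Suc m" using Suc.prems(1) by simp
  have iff: "length (trunc ?bl w) \<le> Suc m \<longleftrightarrow> w \<le> Bp b n2 (Suc m)"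
    using trunc_len_iff[OF bl Suc.prems(2), of "Suc m"] Bp_take by simp
  have "TU (take (Suc (Suc m)) ?al) (trunc ?bl w) =
     (if w \<le> Bp b n2 (Suc m) then (\<Sum>v\<le>w. ((a (m + 2) - 1 + (w - v)) choose (w - v)) * TU (take (Suc m) ?al) (trunc ?bl v)) else 0)"
  proof -
    have "TU (take (Suc m) ?al @ [a (m+2)]) (trunc ?bl w) = (if length (trunc ?bl w) \<le> length (take (Suc m) ?al)
           then (\<Sum>v\<le>w. ((a (m + 2) - 1 + (w - v)) choose (w - v)) * TU (take (Suc m) ?al) (trunc ?bl v)) else 0)"
      by (rule TU_append[OF al0 bl am Suc.prems(2)])
    then show ?thesis unfolding tk lenal0 iff .
  qed
  also have "\<dots> = G a b n2 (Suc m) w"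
  proof -
    have "(\<Sum>v\<le>w. ((a (m + 2) - 1 + (w - v)) choose (w - v)) * TU (take (Suc m) ?al) (trunc ?bl v))
        = (\<Sum>v\<le>w. ((a (m + 2) + (w - v) - 1) choose (w - v)) * G a b n2 m v)"
    proof (rule sum.cong[OF refl])
      fix v assume v: "v \<in> {..w}"
      have "TU (take (Suc m) ?al) (trunc ?bl v) = G a b n2 m v"
        using Suc.IH[of v] Suc.prems v by simp
      moreover have "a (m + 2) - 1 + (w - v) = a (m + 2) + (w - v) - 1" using am by simp
      ultimately show "((a (m + 2) - 1 + (w - v)) choose (w - v)) * TU (take (Suc m) ?al) (trunc ?bl v)
          = ((a (m + 2) + (w - v) - 1) choose (w - v)) * G a b n2 m v" by simp
    qed
    then show ?thesis by simp
  qed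
  finally show ?case .
qed

lemma claim2:
  assumes apos: "\<forall>j\<in>{1..n1}. a j > 0" and bpos: "\<forall>j\<in>{1..n2}. b j > 0"
    and n: "n2 \<le> n1" "1 \<le> n1"
  shows "card (SVT [n1, n2] (\<lambda>(i, j). if i = 1 then a j else if i = 2 then b j else 0))
     = (\<Sum>w\<le>sum_list (map b [1..<n2+1]). G a b n2 (n1 - 1) w)"
proof -
  let ?bl = "map b [1..<n2+1]" and ?al = "map a [1..<n1+1]"
  have bl: "posl ?bl" using posl_map[OF bpos] .
  have al: "posl ?al" "?al \<noteq> []" using posl_map[OF apos] n by auto
  have "SVT [n1, n2] (\<lambda>(i, j). if i = 1 then a j else if i = 2 then b j else 0)
      = SVT [length ?al, length ?bl] (dens ?al ?bl)"
  proof -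
    have "SVT [n1, n2] (\<lambda>(i, j). if i = 1 then a j else if i = 2 then b j else 0)
      = SVT [n1, n2] (dens ?al ?bl)"
    proof (rule SVT_cong)
      fix c assume c: "c \<in> cells [n1, n2]"
      obtain i j where ij: "c = (i, j)" by (cases c)
      show "(\<lambda>(i, j). if i = 1 then a j else if i = 2 then b j else 0) c = dens ?al ?bl c"
        using c unfolding ij dens_def by (auto simp: nth_append)
    qed
    then show ?thesis by simp
  qed
  then have "card (SVT [n1, n2] (\<lambda>(i, j). if i = 1 then a j else if i = 2 then b j else 0)) = T ?al ?bl"
    unfolding T_def by simp
  also have "\<dots> = T ?al (trunc ?bl (sum_list ?bl))" using trunc_full[OF bl] by simp
  also have "\<dots> = (\<Sum>w\<le>sum_list ?bl. TU ?al (trunc ?bl w))"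
    using T_sum[OF al(2,1) bl order_refl] trunc_full[OF bl] n by simp
  also have "\<dots> = (\<Sum>w\<le>sum_list ?bl. G a b n2 (n1 - 1) w)"
  proof (rule sum.cong[OF refl])
    fix w assume w: "w \<in> {..sum_list ?bl}"
    have "take (Suc (n1 - 1)) ?al = ?al" using n by simp
    then show "TU ?al (trunc ?bl w) = G a b n2 (n1 - 1) w"
      using claim1[OF apos bpos, of "n1 - 1" w] n w by simp
  qed
  finally show ?thesis .
qed




definition Sset :: "(nat \<Rightarrow> nat) \<Rightarrow> nat \<Rightarrow> nat \<Rightarrow> nat \<Rightarrow> nat list set" where
  "Sset b n2 m w = {is. length is = m \<and> (\<forall>l\<in>{1..m}. (\<Sum>j=1..l. is ! (j - 1)) \<le> Bp b n2 l) \<and> sum_list is = w}"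

definition Pf :: "(nat \<Rightarrow> nat) \<Rightarrow> nat \<Rightarrow> nat list \<Rightarrow> nat" where
  "Pf a m is = (\<Prod>j=1..m. (a (j + 1) + is ! (j - 1) - 1) choose (is ! (j - 1)))"

lemma sum_nth1: "(\<Sum>j=1..length xs. xs ! (j - 1)) = sum_list (xs :: nat list)"
proof -
  have "(\<Sum>j=1..length xs. xs ! (j - 1)) = (\<Sum>k<length xs. xs ! k)"
    using sum.atLeast1_atMost_eq[of "\<lambda>j. xs ! (j - 1)" "length xs"] by simp
  also have "\<dots> = sum_list xs" by (simp add: sum_list_sum_nth atLeast0LessThan)
  finally show ?thesis .
qed

lemma prefix_app:
  assumes "l \<le> length xs"
  shows "(\<Sum>j=1..l. (xs @ ys) ! (j - 1)) = (\<Sum>j=1..l. xs ! (j - 1))"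
  by (rule sum.cong[OF refl]) (use assms in \<open>auto simp: nth_append\<close>)

lemma Pf_snoc:
  assumes "length js = m"
  shows "Pf a (Suc m) (js @ [t]) = Pf a m js * ((a (m + 2) + t - 1) choose t)"
proof -
  have "Pf a (Suc m) (js @ [t]) = (\<Prod>j=1..m. (a (j + 1) + (js @ [t]) ! (j - 1) - 1) choose ((js @ [t]) ! (j - 1)))
          * ((a (m + 2) + t - 1) choose t)"
    unfolding Pf_def using assms by (simp add: prod.cl_ivl_Suc nth_append)
  also have "(\<Prod>j=1..m. (a (j + 1) + (js @ [t]) ! (j - 1) - 1) choose ((js @ [t]) ! (j - 1))) = Pf a m js"
    unfolding Pf_def by (rule prod.cong[OF refl]) (use assms in \<open>auto simp: nth_append\<close>)
  finally show ?thesis .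
qed

lemma Sset_finite: "finite (Sset b n2 m w)"
proof -
  have "Sset b n2 m w \<subseteq> {is. set is \<subseteq> {..w} \<and> length is = m}"
    unfolding Sset_def using member_le_sum_list by fastforce
  moreover have "finite {is. set is \<subseteq> {..w} \<and> length is = m}"
    by (rule finite_lists_length_eq) simp
  ultimately show ?thesis by (rule finite_subset)
qed

lemma Sset_0: "Sset b n2 0 w = (if w = 0 then {[]} else {})"
  unfolding Sset_def by auto

lemma Sset_Suc:
  "Sset b n2 (Suc m) w = (if w \<le> Bp b n2 (Suc m) then (\<Union>v\<in>{..w}. (\<lambda>js. js @ [w - v]) ` Sset b n2 m v) else {})"
proof (cases "w \<le> Bp b n2 (Suc m)")
  case False
  have "is \<notin> Sset b n2 (Suc m) w" for "is"
  proof
    assume "is \<in> Sset b n2 (Suc m) w"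
    then have A: "length is = Suc m" "\<forall>l\<in>{1..Suc m}. (\<Sum>j=1..l. is ! (j - 1)) \<le> Bp b n2 l" "sum_list is = w"
      unfolding Sset_def by auto
    have "Suc m \<in> {1..Suc m}" by simp
    from bspec[OF A(2) this] have B: "(\<Sum>j=1..Suc m. is ! (j - 1)) \<le> Bp b n2 (Suc m)" .
    have "(\<Sum>j=1..Suc m. is ! (j - 1)) = w" using sum_nth1[of "is"] A(3) unfolding A(1) by (rule trans)
    then show False using False B by linarith
  qed
  then show ?thesis using False by auto
next
  case True
  have "Sset b n2 (Suc m) w = (\<Union>v\<in>{..w}. (\<lambda>js. js @ [w - v]) ` Sset b n2 m v)"
  proof
    show "Sset b n2 (Suc m) w \<subseteq> (\<Union>v\<in>{..w}. (\<lambda>js. js @ [w - v]) ` Sset b n2 m v)"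
    proof
      fix "is" assume his: "is \<in> Sset b n2 (Suc m) w"
      then have len: "length is = Suc m" and cond: "\<forall>l\<in>{1..Suc m}. (\<Sum>j=1..l. is ! (j - 1)) \<le> Bp b n2 l"
        and sm: "sum_list is = w" unfolding Sset_def by auto
      obtain js t where jt: "is = js @ [t]" using len by (cases "is" rule: rev_exhaust) auto
      have ljs: "length js = m" using len jt by simp
      have "js \<in> Sset b n2 m (sum_list js)"
        unfolding Sset_def
      proof (intro CollectI conjI ballI refl ljs)
        fix l assume l: "l \<in> {1..m}"
        have "(\<Sum>j=1..l. is ! (j - 1)) \<le> Bp b n2 l" using cond l by auto
        then show "(\<Sum>j=1..l. js ! (j - 1)) \<le> Bp b n2 l"
          using prefix_app[of l js "[t]"] l ljs jt by simp
      qed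
      moreover have "sum_list js \<le> w" "w - sum_list js = t" using sm jt by auto
      ultimately show "is \<in> (\<Union>v\<in>{..w}. (\<lambda>js. js @ [w - v]) ` Sset b n2 m v)"
        using jt by auto
    qed
    show "(\<Union>v\<in>{..w}. (\<lambda>js. js @ [w - v]) ` Sset b n2 m v) \<subseteq> Sset b n2 (Suc m) w"
    proof
      fix "is" assume "is \<in> (\<Union>v\<in>{..w}. (\<lambda>js. js @ [w - v]) ` Sset b n2 m v)"
      then obtain v js where v: "v \<le> w" "js \<in> Sset b n2 m v" and iseq: "is = js @ [w - v]" by auto
      then have ljs: "length js = m" and cond: "\<forall>l\<in>{1..m}. (\<Sum>j=1..l. js ! (j - 1)) \<le> Bp b n2 l"
        and sm: "sum_list js = v" unfolding Sset_def by auto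
      have smi: "sum_list is = w" using iseq sm v by simp
      show "is \<in> Sset b n2 (Suc m) w"
        unfolding Sset_def
      proof (intro CollectI conjI ballI smi)
        show "length is = Suc m" using iseq ljs by simp
        fix l assume l: "l \<in> {1..Suc m}"
        show "(\<Sum>j=1..l. is ! (j - 1)) \<le> Bp b n2 l"
        proof (cases "l = Suc m")
          case True
          then show ?thesis using sum_nth1[of "is"] smi \<open>w \<le> Bp b n2 (Suc m)\<close> iseq ljs by simp
        next
          case False
          then have "l \<in> {1..m}" using l by auto
          then show ?thesis using prefix_app[of l js "[w - v]"] cond ljs iseq by simp
        qed
      qed
    qed
  qed
  then show ?thesis using True by simp
qed

lemma claim3a: "(\<Sum>is\<in>Sset b n2 m w. Pf a m is) = G a b n2 m w"
proof (induction m arbitrary: w)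
  case 0
  show ?case by (simp add: Sset_0 Pf_def)
next
  case (Suc m)
  show ?case
  proof (cases "w \<le> Bp b n2 (Suc m)")
    case False
    then show ?thesis by (simp add: Sset_Suc)
  next
    case True
    have disj: "\<forall>v\<in>{..w}. \<forall>v'\<in>{..w}. v \<noteq> v' \<longrightarrow>
        (\<lambda>js. js @ [w - v]) ` Sset b n2 m v \<inter> (\<lambda>js. js @ [w - v']) ` Sset b n2 m v' = {}"
      by auto
    have "(\<Sum>is\<in>Sset b n2 (Suc m) w. Pf a (Suc m) is)
        = (\<Sum>v\<in>{..w}. \<Sum>is\<in>(\<lambda>js. js @ [w - v]) ` Sset b n2 m v. Pf a (Suc m) is)"
      unfolding Sset_Suc using True
      by (simp only: if_True) (rule sum.UNION_disjoint[OF finite_atMost _ disj], simp add: Sset_finite)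
    also have "\<dots> = (\<Sum>v\<in>{..w}. \<Sum>js\<in>Sset b n2 m v. Pf a (Suc m) (js @ [w - v]))"
    proof (rule sum.cong[OF refl])
      fix v assume "v \<in> {..w}"
      have "inj_on (\<lambda>js. js @ [w - v]) (Sset b n2 m v)" by (auto simp: inj_on_def)
      then show "(\<Sum>is\<in>(\<lambda>js. js @ [w - v]) ` Sset b n2 m v. Pf a (Suc m) is)
           = (\<Sum>js\<in>Sset b n2 m v. Pf a (Suc m) (js @ [w - v]))"
        by (simp add: sum.reindex)
    qed
    also have "\<dots> = (\<Sum>v\<in>{..w}. \<Sum>js\<in>Sset b n2 m v. Pf a m js * ((a (m + 2) + (w - v) - 1) choose (w - v)))"
      by (rule sum.cong[OF refl], rule sum.cong[OF refl]) (simp add: Pf_snoc Sset_def)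
    also have "\<dots> = (\<Sum>v\<le>w. ((a (m + 2) + (w - v) - 1) choose (w - v)) * G a b n2 m v)"
      by (simp add: sum_distrib_right[symmetric] Suc.IH mult.commute)
    finally show ?thesis using True by simp
  qed
qed


theorem theorem7:
  fixes n1 n2 :: nat and a b :: "nat \<Rightarrow> nat"
  assumes "n1 \<ge> n2" and "n2 \<ge> 1" and "n1 \<ge> 2"
    and "\<forall>j\<in>{1..n1}. a j > 0"
    and "\<forall>j\<in>{1..n2}. b j > 0"
  shows "card (SVT [n1, n2]
            (\<lambda>(i, j). if i = 1 then a j else if i = 2 then b j else 0))
       = (\<Sum>is\<in>{is :: nat list. length is = n1 - 1 \<and>
              (\<forall>l\<in>{1..n1 - 1}. (\<Sum>j=1..l. is ! (j - 1))
                   \<le> (\<Sum>j=1..l. if j \<le> n2 then b j else 0))}.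
            \<Prod>j=1..n1 - 1. (a (j + 1) + is ! (j - 1) - 1) choose (is ! (j - 1)))"
proof -
  let ?bl = "map b [1..<n2+1]"
  define I where "I = {is :: nat list. length is = n1 - 1 \<and>
              (\<forall>l\<in>{1..n1 - 1}. (\<Sum>j=1..l. is ! (j - 1))
                   \<le> (\<Sum>j=1..l. if j \<le> n2 then b j else 0))}"
  have eqI: "I = (\<Union>w\<in>{..sum_list ?bl}. Sset b n2 (n1 - 1) w)"
  proof
    show "I \<subseteq> (\<Union>w\<in>{..sum_list ?bl}. Sset b n2 (n1 - 1) w)"
    proof
      fix "is" assume "is \<in> I"
      then have len: "length is = n1 - 1" and cond: "\<forall>l\<in>{1..n1-1}. (\<Sum>j=1..l. is ! (j - 1)) \<le> Bp b n2 l"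
        unfolding I_def Bp_def by auto
      have "n1 - 1 \<in> {1..n1-1}" using assms(3) by simp
      from bspec[OF cond this] have c1: "(\<Sum>j=1..n1-1. is ! (j - 1)) \<le> Bp b n2 (n1 - 1)" .
      have "(\<Sum>j=1..n1-1. is ! (j - 1)) = sum_list is" using sum_nth1[of "is"] unfolding len .
      then have "sum_list is \<le> Bp b n2 (n1 - 1)" using c1 by simp
      also have "\<dots> = sum_list (take (n1 - 1) ?bl)" using Bp_take by simp
      also have "\<dots> \<le> sum_list ?bl" by (metis append_take_drop_id sum_list_append le_add1)
      finally have "sum_list is \<le> sum_list ?bl" .
      then show "is \<in> (\<Union>w\<in>{..sum_list ?bl}. Sset b n2 (n1 - 1) w)"
        using len cond unfolding Sset_def by auto
    qed
    show "(\<Union>w\<in>{..sum_list ?bl}. Sset b n2 (n1 - 1) w) \<subseteq> I"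
      unfolding Sset_def I_def Bp_def by auto
  qed
  have "(\<Sum>is\<in>I. \<Prod>j=1..n1 - 1. (a (j + 1) + is ! (j - 1) - 1) choose (is ! (j - 1)))
      = (\<Sum>is\<in>I. Pf a (n1 - 1) is)" unfolding Pf_def by (rule refl)
  also have "\<dots> = (\<Sum>w\<in>{..sum_list ?bl}. \<Sum>is\<in>Sset b n2 (n1 - 1) w. Pf a (n1 - 1) is)"
    unfolding eqI by (rule sum.UNION_disjoint) (simp_all add: Sset_finite, auto simp: Sset_def)
  also have "\<dots> = (\<Sum>w\<in>{..sum_list ?bl}. G a b n2 (n1 - 1) w)"
    using claim3a by simp
  also have "\<dots> = card (SVT [n1, n2] (\<lambda>(i, j). if i = 1 then a j else if i = 2 then b j else 0))"
    using claim2[OF assms(4,5) assms(1)] assms(3) by simp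
  finally show ?thesis unfolding I_def by simp
qed

end
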